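(* (a) Every Steiner triple system on $9$ points of $3$-rank at most $8$ is resolvable. (b) Let $S$ be a Steiner triple system on $27$ points of $3$-rank at most $25$, with a decomposition into three groups $G_1,G_2,G_3$ of size $9$, three $STS(9)$'s on $G_1,G_2,G_3$, and one transversal design $TD[3;9]$ on $G_1,G_2,G_3$ (as in the context). If the Latin square of order $9$ corresponding to this transversal design has an orthogonal mate, then $S$ is resolvable; its blocks partition into $13$ parallel classes.
   Context: A Steiner triple system $STS(v)$ is a pair $(\mathcal{P},\mathcal{B})$ with $|\mathcal{P}|=v$ and $\mathcal{B}$ a set of $3$-subsets (blocks) such that every $2$-subset lies in exactly one block. Its $3$-rank is the rank over $\mathbb{F}_3$ of its block–point incidence matrix. A parallel class is a set of blocks partitioning the point set; the system is resolvable if its blocks can be partitioned into parallel classes. A transversal design $TD[3;T]$ on disjoint groups $H_1,H_2,H_3$ of size $T$ is a set of $T^2$ triples meeting each group once such that each pair of points from distinct groups lies in exactly one triple; equivalently a Latin square of order $T$ (rows $H_1$, columns $H_2$, symbols $H_3$). Two Latin squares of order $n$ are orthogonal if superimposing them yields every ordered pair of symbols exactly once; an orthogonal mate is a Latin square orthogonal to the given one. By the cited structure theorem (Jungnickel et al.), an $STS(27)$ of $3$-rank at most $25$ has its point set partitioned into three groups of size $9$ such that its blocks split into an $STS(9)$ on each group together with a $TD[3;9]$ on the three groups. *)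

theory Defs
  imports Main "HOL-Library.Disjoint_Sets"
begin

definition sts :: "'a set \<Rightarrow> 'a set set \<Rightarrow> bool" where
  "sts P B \<longleftrightarrow> finite P \<and> (\<forall>b\<in>B. b \<subseteq> P \<and> card b = 3) \<and>
     (\<forall>x\<in>P. \<forall>y\<in>P. x \<noteq> y \<longrightarrow> (\<exists>!b. b \<in> B \<and> {x, y} \<subseteq> b))"

text \<open>Linear independence over GF(3) of the rows (indexed by the blocks in S) of the
  block-point incidence matrix; field elements are represented by integers mod 3.\<close>
definition f3_indep_rows :: "'a set \<Rightarrow> 'a set set \<Rightarrow> bool" where
  "f3_indep_rows P S \<longleftrightarrow>
     (\<forall>c :: 'a set \<Rightarrow> int.
        (\<forall>p\<in>P. (\<Sum>b\<in>S. c b * (if p \<in> b then 1 else 0)) mod 3 = 0)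
          \<longrightarrow> (\<forall>b\<in>S. c b mod 3 = 0))"

text \<open>3-rank: rank over GF(3) of the block-point incidence matrix
  (= maximal number of linearly independent rows).\<close>
definition rank3 :: "'a set \<Rightarrow> 'a set set \<Rightarrow> nat" where
  "rank3 P B = Max {card S | S. S \<subseteq> B \<and> f3_indep_rows P S}"

definition parallel_class :: "'a set \<Rightarrow> 'a set set \<Rightarrow> bool" where
  "parallel_class P C \<longleftrightarrow> partition_on P C"

definition resolution :: "'a set \<Rightarrow> 'a set set \<Rightarrow> 'a set set set \<Rightarrow> bool" where
  "resolution P B R \<longleftrightarrow> partition_on B R \<and> (\<forall>C\<in>R. parallel_class P C)"

definition resolvable :: "'a set \<Rightarrow> 'a set set \<Rightarrow> bool" where
  "resolvable P B \<longleftrightarrow> (\<exists>R. resolution P B R)"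

definition transversal_design :: "'a set \<Rightarrow> 'a set \<Rightarrow> 'a set \<Rightarrow> 'a set set \<Rightarrow> bool" where
  "transversal_design H1 H2 H3 D \<longleftrightarrow>
     (\<forall>t\<in>D. \<exists>x\<in>H1. \<exists>y\<in>H2. \<exists>z\<in>H3. t = {x, y, z}) \<and>
     (\<forall>x y. ((x \<in> H1 \<and> y \<in> H2) \<or> (x \<in> H1 \<and> y \<in> H3) \<or> (x \<in> H2 \<and> y \<in> H3))
        \<longrightarrow> (\<exists>!t. t \<in> D \<and> {x, y} \<subseteq> t))"

text \<open>The Latin square of a TD: rows H1, columns H2, symbols H3.\<close>
definition td_square :: "'a set \<Rightarrow> 'a set set \<Rightarrow> 'a \<Rightarrow> 'a \<Rightarrow> 'a" where
  "td_square H3 D x y = (THE z. z \<in> H3 \<and> {x, y, z} \<in> D)"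

definition latin_square :: "'a set \<Rightarrow> 'a set \<Rightarrow> 's set \<Rightarrow> ('a \<Rightarrow> 'a \<Rightarrow> 's) \<Rightarrow> bool" where
  "latin_square Rw Cl Sy L \<longleftrightarrow> finite Rw \<and> card Rw = card Cl \<and> card Cl = card Sy \<and>
     (\<forall>x\<in>Rw. bij_betw (L x) Cl Sy) \<and> (\<forall>y\<in>Cl. bij_betw (\<lambda>x. L x y) Rw Sy)"

definition orthogonal_squares ::
  "'a set \<Rightarrow> 'a set \<Rightarrow> 's set \<Rightarrow> 't set \<Rightarrow> ('a \<Rightarrow> 'a \<Rightarrow> 's) \<Rightarrow> ('a \<Rightarrow> 'a \<Rightarrow> 't) \<Rightarrow> bool" where
  "orthogonal_squares Rw Cl S1 S2 L M \<longleftrightarrow>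
     bij_betw (\<lambda>(x, y). (L x y, M x y)) (Rw \<times> Cl) (S1 \<times> S2)"

definition has_orthogonal_mate :: "'a set \<Rightarrow> 'a set \<Rightarrow> 's set \<Rightarrow> ('a \<Rightarrow> 'a \<Rightarrow> 's) \<Rightarrow> bool" where
  "has_orthogonal_mate Rw Cl Sy L \<longleftrightarrow>
     (\<exists>M. latin_square Rw Cl Sy M \<and> orthogonal_squares Rw Cl Sy Sy L M)"

end

theory Submission
  imports Defs
begin


lemma ex1_same: "\<exists>!t. P t \<Longrightarrow> P a \<Longrightarrow> P b \<Longrightarrow> a = b"
  by (erule ex1E) blast

lemma sts_ex1:
  assumes s: "sts P B" and "x \<in> P" "y \<in> P" "x \<noteq> y"
  shows "\<exists>!b. b \<in> B \<and> {x, y} \<subseteq> b"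
proof -
  have h: "\<forall>x\<in>P. \<forall>y\<in>P. x \<noteq> y \<longrightarrow> (\<exists>!b. b \<in> B \<and> {x, y} \<subseteq> b)"
    using s unfolding sts_def by (elim conjE)
  show ?thesis using h[rule_format, OF assms(2-4)] .
qed

lemma sts_blockD: "sts P B \<Longrightarrow> b \<in> B \<Longrightarrow> b \<subseteq> P \<and> card b = 3"
  unfolding sts_def by blast

lemma sts_unique:
  assumes "sts P B" "x \<in> P" "y \<in> P" "x \<noteq> y" "b \<in> B" "c \<in> B" "x \<in> b" "y \<in> b" "x \<in> c" "y \<in> c"
  shows "b = c"
  by (rule ex1_same[OF sts_ex1[OF assms(1-4)]]) (use assms in auto)

lemma sts_exists: "sts P B \<Longrightarrow> x \<in> P \<Longrightarrow> y \<in> P \<Longrightarrow> x \<noteq> y \<Longrightarrow> \<exists>b\<in>B. x \<in> b \<and> y \<in> b"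
  by (drule (3) sts_ex1) auto

lemma sts_finite: "sts P B \<Longrightarrow> finite B"
proof -
  assume s: "sts P B"
  hence "B \<subseteq> Pow P" using sts_blockD by blast
  moreover have "finite P" using s sts_def by blast
  ultimately show ?thesis by (meson finite_Pow_iff finite_subset)
qed

lemma sts_deg:
  assumes s: "sts P B" and c9: "card P = 9" and x: "x \<in> P"
  shows "card {b\<in>B. x \<in> b} = 4"
proof -
  let ?S = "{b\<in>B. x \<in> b}"
  let ?C = "(\<lambda>b. b - {x}) ` ?S"
  have fP: "finite P" using s sts_def by blast
  have fS: "finite ?S" using sts_finite[OF s] by simp
  have inj: "inj_on (\<lambda>b. b - {x}) ?S"
    by (rule inj_onI) (metis (no_types, lifting) insert_Diff mem_Collect_eq)
  have c2: "\<forall>c\<in>?C. card c = 2" using sts_blockD[OF s] by auto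
  have dj: "\<forall>c1\<in>?C. \<forall>c2\<in>?C. c1 \<noteq> c2 \<longrightarrow> c1 \<inter> c2 = {}"
  proof (intro ballI impI)
    fix c1 c2 assume "c1 \<in> ?C" "c2 \<in> ?C" "c1 \<noteq> c2"
    then obtain b1 b2 where b: "b1 \<in> ?S" "b2 \<in> ?S" "c1 = b1 - {x}" "c2 = b2 - {x}" by blast
    show "c1 \<inter> c2 = {}"
    proof (rule ccontr)
      assume "c1 \<inter> c2 \<noteq> {}"
      then obtain y where y: "y \<in> b1" "y \<in> b2" "y \<noteq> x" using b by blast
      have "y \<in> P" using y b sts_blockD[OF s] by blast
      hence "b1 = b2" using sts_unique[OF s x \<open>y \<in> P\<close>] y b by auto
      thus False using b \<open>c1 \<noteq> c2\<close> by simp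
    qed
  qed
  have un: "\<Union>?C = P - {x}"
  proof
    show "\<Union>?C \<subseteq> P - {x}" using sts_blockD[OF s] by blast
    show "P - {x} \<subseteq> \<Union>?C"
    proof
      fix y assume "y \<in> P - {x}"
      then obtain b where "b \<in> B" "x \<in> b" "y \<in> b" using sts_exists[OF s x] by blast
      thus "y \<in> \<Union>?C" using \<open>y \<in> P - {x}\<close> by blast
    qed
  qed
  have "2 * card ?C = card (\<Union>?C)"
    by (rule card_partition) (use fS c2 dj un fP in auto)
  also have "\<dots> = 8" using un c9 x fP by simp
  finally have "card ?C = 4" by simp
  thus ?thesis using card_image[OF inj] by simp
qed

lemma sts_meet:
  assumes s: "sts P B" and b: "b \<in> B" and x: "x \<in> P" "x \<notin> b"
  shows "card {c\<in>B. x \<in> c \<and> c \<inter> b \<noteq> {}} = 3"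
proof -
  define g where "g y = (THE c. c \<in> B \<and> {x, y} \<subseteq> c)" for y
  have bP: "b \<subseteq> P" "card b = 3" using sts_blockD[OF s b] by auto
  have g: "g y \<in> B \<and> x \<in> g y \<and> y \<in> g y" if "y \<in> b" for y
  proof -
    have yP: "y \<in> P" using bP that by blast
    have ne: "x \<noteq> y" using x that by blast
    have "\<exists>!c. c \<in> B \<and> {x, y} \<subseteq> c" by (rule sts_ex1[OF s x(1) yP ne])
    from theI'[OF this] show ?thesis unfolding g_def by simp
  qed
  have eq: "{c\<in>B. x \<in> c \<and> c \<inter> b \<noteq> {}} = g ` b"
  proof
    show "g ` b \<subseteq> {c\<in>B. x \<in> c \<and> c \<inter> b \<noteq> {}}" using g by blast
    show "{c\<in>B. x \<in> c \<and> c \<inter> b \<noteq> {}} \<subseteq> g ` b"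
    proof
      fix c assume c: "c \<in> {c\<in>B. x \<in> c \<and> c \<inter> b \<noteq> {}}"
      then obtain y where y: "y \<in> c" "y \<in> b" by blast
      have yP: "y \<in> P" using bP y by blast
      have ne: "x \<noteq> y" using x y by blast
      have gy: "g y \<in> B" "x \<in> g y" "y \<in> g y" using g[OF y(2)] by auto
      have cc: "c \<in> B" "x \<in> c" using c by auto
      have "c = g y" by (rule sts_unique[OF s x(1) yP ne cc(1) gy(1) cc(2) y(1) gy(2) gy(3)])
      thus "c \<in> g ` b" using y by blast
    qed
  qed
  have "inj_on g b"
  proof (rule inj_onI)
    fix y1 y2 assume y: "y1 \<in> b" "y2 \<in> b" "g y1 = g y2"
    show "y1 = y2"
    proof (rule ccontr)
      assume "y1 \<noteq> y2"
      have gy: "g y1 \<in> B" "y1 \<in> g y1" "y2 \<in> g y1" using g y by auto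
      have yP: "y1 \<in> P" "y2 \<in> P" using bP y by auto
      have "g y1 = b" by (rule sts_unique[OF s yP \<open>y1 \<noteq> y2\<close> gy(1) b gy(2) gy(3) y(1) y(2)])
      thus False using g[OF y(1)] x by simp
    qed
  qed
  thus ?thesis using eq card_image bP by metis
qed

lemma sts_par_unique:
  assumes s: "sts P B" and c9: "card P = 9" and b: "b \<in> B" and x: "x \<in> P" "x \<notin> b"
  shows "\<exists>!c. c \<in> B \<and> x \<in> c \<and> c \<inter> b = {}"
proof -
  define A where "A = {c\<in>B. x \<in> c}"
  define C where "C = {c\<in>B. x \<in> c \<and> c \<inter> b \<noteq> {}}"
  have e: "{c\<in>B. x \<in> c \<and> c \<inter> b = {}} = A - C" unfolding A_def C_def by blast
  have fin: "finite A" unfolding A_def using sts_finite[OF s] by simp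
  have sub: "C \<subseteq> A" unfolding A_def C_def by blast
  have "card (A - C) = card A - card C" using card_Diff_subset[OF finite_subset[OF sub fin] sub] .
  moreover have "card A = 4" unfolding A_def by (rule sts_deg[OF s c9 x(1)])
  moreover have "card C = 3" unfolding C_def by (rule sts_meet[OF s b x])
  ultimately have "card (A - C) = 1" by simp
  then obtain c where c: "A - C = {c}" by (rule card_1_singletonE)
  show ?thesis
  proof (rule ex1I[of _ c])
    show "c \<in> B \<and> x \<in> c \<and> c \<inter> b = {}" using c e by blast
    fix d assume "d \<in> B \<and> x \<in> d \<and> d \<inter> b = {}"
    hence "d \<in> A - C" using e by blast
    thus "d = c" using c by blast
  qed
qed

definition par :: "'a set set \<Rightarrow> 'a set \<Rightarrow> 'a set set" where
  "par B b = {c\<in>B. c = b \<or> c \<inter> b = {}}"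

lemma par_partition:
  assumes s: "sts P B" and c9: "card P = 9" and b: "b \<in> B"
  shows "partition_on P (par B b)"
  unfolding partition_on_def disjoint_def
proof (intro conjI ballI impI)
  show "\<Union>(par B b) = P"
  proof
    show "\<Union>(par B b) \<subseteq> P" using sts_blockD[OF s] unfolding par_def by blast
    show "P \<subseteq> \<Union>(par B b)"
    proof
      fix x assume x: "x \<in> P"
      show "x \<in> \<Union>(par B b)"
      proof (cases "x \<in> b")
        case True thus ?thesis using b unfolding par_def by blast
      next
        case False thus ?thesis using sts_par_unique[OF s c9 b x False] unfolding par_def by blast
      qed
    qed
  qed
  show "{} \<notin> par B b" using sts_blockD[OF s] unfolding par_def by fastforce
  fix c1 c2 assume c: "c1 \<in> par B b" "c2 \<in> par B b" "c1 \<noteq> c2"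
  show "c1 \<inter> c2 = {}"
  proof (rule ccontr)
    assume "c1 \<inter> c2 \<noteq> {}"
    then obtain x where x: "x \<in> c1" "x \<in> c2" by blast
    have cb: "c1 \<in> B" "c2 \<in> B" using c unfolding par_def by auto
    show False
    proof (cases "c1 = b \<or> c2 = b")
      case True thus ?thesis using c x unfolding par_def by blast
    next
      case False
      hence d: "c1 \<inter> b = {}" "c2 \<inter> b = {}" using c unfolding par_def by auto
      have "x \<in> P" using x cb sts_blockD[OF s] by blast
      moreover have "x \<notin> b" using d x by blast
      ultimately show False using sts_par_unique[OF s c9 b] x cb d c(3) by blast
    qed
  qed
qed

lemma par_self: "b \<in> B \<Longrightarrow> b \<in> par B b" unfolding par_def by simp

lemma par_sub:
  assumes s: "sts P B" and c9: "card P = 9" and b: "b \<in> B" and c: "c \<in> par B b"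
  shows "par B c \<subseteq> par B b"
proof
  fix d assume d: "d \<in> par B c"
  have cB: "c \<in> B" using c unfolding par_def by simp
  have bc: "b \<in> par B c" using c b unfolding par_def by blast
  have pc: "partition_on P (par B c)" by (rule par_partition[OF s c9 cB])
  show "d \<in> par B b"
  proof (cases "d = b")
    case True thus ?thesis using par_self[OF b] by simp
  next
    case False
    hence "d \<inter> b = {}" using pc d bc unfolding partition_on_def disjoint_def by blast
    thus ?thesis using d unfolding par_def by blast
  qed
qed

lemma par_eq:
  assumes s: "sts P B" and c9: "card P = 9" and b: "b \<in> B" and c: "c \<in> par B b"
  shows "par B c = par B b"
proof
  show "par B c \<subseteq> par B b" by (rule par_sub[OF s c9 b c])
  have cB: "c \<in> B" using c unfolding par_def by simp
  have bc: "b \<in> par B c" using c b unfolding par_def by blast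
  show "par B b \<subseteq> par B c" by (rule par_sub[OF s c9 cB bc])
qed

lemma sts9_resolution:
  assumes s: "sts P B" and c9: "card P = 9"
  shows "resolution P B (par B ` B) \<and> card (par B ` B) = 4"
proof
  show "resolution P B (par B ` B)"
    unfolding resolution_def parallel_class_def
  proof (intro conjI)
    show "\<forall>C\<in>par B ` B. partition_on P C"
      using par_partition[OF s c9] by blast
    show "partition_on B (par B ` B)"
      unfolding partition_on_def disjoint_def
  proof (intro conjI ballI impI)
    show "\<Union>(par B ` B) = B" using par_self unfolding par_def by blast
    show "{} \<notin> par B ` B" using par_self by blast
    fix C1 C2 assume C: "C1 \<in> par B ` B" "C2 \<in> par B ` B" "C1 \<noteq> C2"
    then obtain b1 b2 where b: "b1 \<in> B" "b2 \<in> B" "C1 = par B b1" "C2 = par B b2" by blast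
    show "C1 \<inter> C2 = {}"
    proof (rule ccontr)
      assume "C1 \<inter> C2 \<noteq> {}"
      then obtain c where "c \<in> par B b1" "c \<in> par B b2" using b by blast
      hence "par B b1 = par B b2" using par_eq[OF s c9] b by metis
      thus False using b C by simp
    qed
  qed
  qed
  have "P \<noteq> {}" using c9 by auto
  then obtain x where x: "x \<in> P" by blast
  have img: "par B ` B = par B ` {c\<in>B. x \<in> c}"
  proof
    show "par B ` {c\<in>B. x \<in> c} \<subseteq> par B ` B" by blast
    show "par B ` B \<subseteq> par B ` {c\<in>B. x \<in> c}"
    proof
      fix C assume "C \<in> par B ` B"
      then obtain b where b: "b \<in> B" "C = par B b" by blast
      have "x \<in> \<Union>(par B b)" using par_partition[OF s c9 b(1)] x unfolding partition_on_def by blast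
      then obtain c where c: "c \<in> par B b" "x \<in> c" by blast
      have "par B c = C" using par_eq[OF s c9 b(1) c(1)] b by simp
      moreover have "c \<in> B" using c unfolding par_def by simp
      ultimately show "C \<in> par B ` {c\<in>B. x \<in> c}" using c by blast
    qed
  qed
  have "inj_on (par B) {c\<in>B. x \<in> c}"
  proof (rule inj_onI)
    fix c1 c2 assume c: "c1 \<in> {c\<in>B. x \<in> c}" "c2 \<in> {c\<in>B. x \<in> c}" "par B c1 = par B c2"
    hence "c1 \<in> par B c2" using par_self by fastforce
    thus "c1 = c2" using c unfolding par_def by blast
  qed
  hence "card (par B ` {c\<in>B. x \<in> c}) = card {c\<in>B. x \<in> c}" by (rule card_image)
  thus "card (par B ` B) = 4" using img sts_deg[OF s c9 x] by simp
qed



lemma partition_on_Un: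
  assumes X: "partition_on A X" and Y: "partition_on A' Y" and d: "A \<inter> A' = {}"
  shows "partition_on (A \<union> A') (X \<union> Y)"
proof (rule partition_onI)
  show "\<Union>(X \<union> Y) = A \<union> A'" using X Y unfolding partition_on_def by auto
  show "{} \<notin> X \<union> Y" using X Y unfolding partition_on_def by auto
  fix p q assume pq: "p \<in> X \<union> Y" "q \<in> X \<union> Y" "p \<noteq> q"
  have sX: "p \<subseteq> A" if "p \<in> X" for p using X that unfolding partition_on_def by auto
  have sY: "p \<subseteq> A'" if "p \<in> Y" for p using Y that unfolding partition_on_def by auto
  have dX: "disjnt p q" if "p \<in> X" "q \<in> X" "p \<noteq> q" for p q
    using X that unfolding partition_on_def pairwise_def by auto
  have dY: "disjnt p q" if "p \<in> Y" "q \<in> Y" "p \<noteq> q" for p q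
    using Y that unfolding partition_on_def pairwise_def by auto
  show "disjnt p q"
  proof (cases "p \<in> X")
    case pX: True
    show ?thesis
    proof (cases "q \<in> X")
      case True thus ?thesis using dX pX pq by blast
    next
      case False hence "q \<in> Y" using pq by blast
      thus ?thesis using sX[OF pX] sY d unfolding disjnt_def by blast
    qed
  next
    case pX: False hence pY: "p \<in> Y" using pq by blast
    show ?thesis
    proof (cases "q \<in> Y")
      case True thus ?thesis using dY pY pq by blast
    next
      case False hence "q \<in> X" using pq by blast
      thus ?thesis using sY[OF pY] sX d unfolding disjnt_def by blast
    qed
  qed
qed

lemma td_ex1:
  assumes td: "transversal_design G1 G2 G3 D" and x: "x \<in> G1" and y: "y \<in> G2"
  shows "\<exists>!t. t \<in> D \<and> {x, y} \<subseteq> t"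
proof -
  have h: "\<forall>x y. ((x \<in> G1 \<and> y \<in> G2) \<or> (x \<in> G1 \<and> y \<in> G3) \<or> (x \<in> G2 \<and> y \<in> G3))
        \<longrightarrow> (\<exists>!t. t \<in> D \<and> {x, y} \<subseteq> t)"
    using td unfolding transversal_design_def by (elim conjE)
  show ?thesis by (rule h[rule_format, OF disjI1[OF conjI[OF x y]]])
qed

lemma td_form:
  assumes td: "transversal_design G1 G2 G3 D" and t: "t \<in> D"
  shows "\<exists>x\<in>G1. \<exists>y\<in>G2. \<exists>z\<in>G3. t = {x, y, z}"
proof -
  have h: "\<forall>t\<in>D. \<exists>x\<in>G1. \<exists>y\<in>G2. \<exists>z\<in>G3. t = {x, y, z}"
    using td unfolding transversal_design_def by (elim conjE)
  show ?thesis using h t by blast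
qed

lemma td_L:
  assumes td: "transversal_design G1 G2 G3 D"
    and d: "G1 \<inter> G2 = {}" "G1 \<inter> G3 = {}" "G2 \<inter> G3 = {}"
    and x: "x \<in> G1" and y: "y \<in> G2"
  shows "td_square G3 D x y \<in> G3 \<and> {x, y, td_square G3 D x y} \<in> D"
proof -
  have e1: "\<exists>!t. t \<in> D \<and> {x, y} \<subseteq> t" by (rule td_ex1[OF td x y])
  then obtain t where t: "t \<in> D" "{x, y} \<subseteq> t" by (blast dest: ex1_implies_ex)
  obtain a b c where abc: "a \<in> G1" "b \<in> G2" "c \<in> G3" "t = {a, b, c}"
    using td_form[OF td t(1)] by blast
  have "x = a" using t abc x d by blast
  moreover have "y = b" using t abc y d by blast
  ultimately have ex: "c \<in> G3 \<and> {x, y, c} \<in> D" using abc t by simp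
  have un: "z = c" if "z \<in> G3 \<and> {x, y, z} \<in> D" for z
  proof -
    have eq: "{x, y, z} = {x, y, c}" by (rule ex1_same[OF e1]) (use that ex in auto)
    have "z \<in> {x, y, c}" unfolding eq[symmetric] by simp
    moreover have "z \<noteq> x" using that x d(2) by auto
    moreover have "z \<noteq> y" using that y d(3) by auto
    ultimately show ?thesis by simp
  qed
  have "\<exists>!z. z \<in> G3 \<and> {x, y, z} \<in> D" by (rule ex1I[of _ c], rule ex, rule un)
  from theI'[OF this] show ?thesis unfolding td_square_def .
qed

lemma td_L_eq:
  assumes td: "transversal_design G1 G2 G3 D"
    and d: "G1 \<inter> G2 = {}" "G1 \<inter> G3 = {}" "G2 \<inter> G3 = {}"
    and x: "x \<in> G1" and y: "y \<in> G2" and z: "z \<in> G3" "{x, y, z} \<in> D"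
  shows "td_square G3 D x y = z"
proof -
  let ?c = "td_square G3 D x y"
  have ex: "?c \<in> G3 \<and> {x, y, ?c} \<in> D" by (rule td_L[OF td d x y])
  have eq: "{x, y, z} = {x, y, ?c}" by (rule ex1_same[OF td_ex1[OF td x y]]) (use z ex in auto)
  have "z \<in> {x, y, ?c}" unfolding eq[symmetric] by simp
  moreover have "z \<noteq> x" using z x d(2) by auto
  moreover have "z \<noteq> y" using z y d(3) by auto
  ultimately show ?thesis by simp
qed

lemma blkeq:
  assumes d: "G1 \<inter> G2 = {}" "G1 \<inter> G3 = {}" "G2 \<inter> G3 = {}"
    and "x \<in> G1" "x' \<in> G1" "y \<in> G2" "y' \<in> G2" "z \<in> G3" "z' \<in> G3"
    and "{x, y, z} = {x', y', z'}"
  shows "x = x' \<and> y = y' \<and> z = z'"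
proof -
  have "x \<in> {x', y', z'}" "y \<in> {x', y', z'}" "z \<in> {x', y', z'}" using assms(10) by auto
  thus ?thesis using assms by blast
qed



lemma partb:
  assumes P: "P = G1 \<union> G2 \<union> G3"
    and d: "G1 \<inter> G2 = {}" "G1 \<inter> G3 = {}" "G2 \<inter> G3 = {}"
    and c: "card G1 = 9" "card G2 = 9" "card G3 = 9"
    and s1: "sts G1 B1" and s2: "sts G2 B2" and s3: "sts G3 B3"
    and td: "transversal_design G1 G2 G3 D"
    and Bdef: "B = B1 \<union> B2 \<union> B3 \<union> D"
    and om: "has_orthogonal_mate G1 G2 G3 (td_square G3 D)"
  shows "\<exists>R. resolution P B R \<and> card R = 13"
proof -
  define L where "L = td_square G3 D"
  obtain M where lsM: "latin_square G1 G2 G3 M" and orth: "orthogonal_squares G1 G2 G3 G3 L M"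
    using om unfolding has_orthogonal_mate_def L_def by blast
  have Mrow: "bij_betw (M x) G2 G3" if "x \<in> G1" for x using lsM that unfolding latin_square_def by blast
  have Mcol: "bij_betw (\<lambda>x. M x y) G1 G3" if "y \<in> G2" for y using lsM that unfolding latin_square_def by blast
  have Ob: "bij_betw (\<lambda>(x, y). (L x y, M x y)) (G1 \<times> G2) (G3 \<times> G3)"
    using orth unfolding orthogonal_squares_def .
  have LD: "L x y \<in> G3 \<and> {x, y, L x y} \<in> D" if "x \<in> G1" "y \<in> G2" for x y
    using td_L[OF td d that] unfolding L_def .
  have Dform: "\<exists>x\<in>G1. \<exists>y\<in>G2. t = {x, y, L x y}" if tD: "t \<in> D" for t
  proof -
    obtain x y z where "x \<in> G1" "y \<in> G2" "z \<in> G3" "t = {x, y, z}"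
      using td_form[OF td tD] by blast
    thus ?thesis using td_L_eq[OF td d, of x y z] tD unfolding L_def by blast
  qed
  have Dne1: "t \<inter> G1 \<noteq> {} \<and> t \<inter> G2 \<noteq> {}" if "t \<in> D" for t
    using Dform[OF that] by blast
  have bl1: "b \<subseteq> G1 \<and> b \<noteq> {}" if "b \<in> B1" for b using sts_blockD[OF s1 that] by auto
  have bl2: "b \<subseteq> G2 \<and> b \<noteq> {}" if "b \<in> B2" for b using sts_blockD[OF s2 that] by auto
  have bl3: "b \<subseteq> G3 \<and> b \<noteq> {}" if "b \<in> B3" for b using sts_blockD[OF s3 that] by auto
  have B12: "B1 \<inter> B2 = {}" using bl1 bl2 d by blast
  have B13: "B1 \<inter> B3 = {}" using bl1 bl3 d by blast
  have B23: "B2 \<inter> B3 = {}" using bl2 bl3 d by blast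
  have BD: "(B1 \<union> B2 \<union> B3) \<inter> D = {}"
  proof -
    have "t \<notin> B1 \<and> t \<notin> B2 \<and> t \<notin> B3" if "t \<in> D" for t
      using Dne1[OF that] bl1 bl2 bl3 d by blast
    thus ?thesis by blast
  qed
  obtain R1 where R1: "resolution G1 B1 R1" "card R1 = 4"
    using sts9_resolution[OF s1 c(1)] by blast
  obtain R2 where R2: "resolution G2 B2 R2" "card R2 = 4"
    using sts9_resolution[OF s2 c(2)] by blast
  obtain R3 where R3: "resolution G3 B3 R3" "card R3 = 4"
    using sts9_resolution[OF s3 c(3)] by blast
  have finR1: "finite R1" using R1(2) card_gt_0_iff[of R1] by simp
  have "\<exists>h. bij_betw h {0..<4::nat} R1" using ex_bij_betw_nat_finite[OF finR1] R1(2) by simp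
  then obtain f1 where f1: "bij_betw f1 {0..<4::nat} R1" by blast
  have finR2: "finite R2" using R2(2) card_gt_0_iff[of R2] by simp
  have "\<exists>h. bij_betw h {0..<4::nat} R2" using ex_bij_betw_nat_finite[OF finR2] R2(2) by simp
  then obtain f2 where f2: "bij_betw f2 {0..<4::nat} R2" by blast
  have finR3: "finite R3" using R3(2) card_gt_0_iff[of R3] by simp
  have "\<exists>h. bij_betw h {0..<4::nat} R3" using ex_bij_betw_nat_finite[OF finR3] R3(2) by simp
  then obtain f3 where f3: "bij_betw f3 {0..<4::nat} R3" by blast
  have pR1: "partition_on B1 R1" "\<forall>C\<in>R1. partition_on G1 C"
    using R1 unfolding resolution_def parallel_class_def by auto
  have pR2: "partition_on B2 R2" "\<forall>C\<in>R2. partition_on G2 C"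
    using R2 unfolding resolution_def parallel_class_def by auto
  have pR3: "partition_on B3 R3" "\<forall>C\<in>R3. partition_on G3 C"
    using R3 unfolding resolution_def parallel_class_def by auto
  have f1i: "f1 i \<in> R1 \<and> f1 i \<subseteq> B1 \<and> f1 i \<noteq> {}" if "i < 4" for i
    using f1 that pR1(1) unfolding bij_betw_def partition_on_def by auto
  have f2i: "f2 i \<in> R2 \<and> f2 i \<subseteq> B2 \<and> f2 i \<noteq> {}" if "i < 4" for i
    using f2 that pR2(1) unfolding bij_betw_def partition_on_def by auto
  have f3i: "f3 i \<in> R3 \<and> f3 i \<subseteq> B3 \<and> f3 i \<noteq> {}" if "i < 4" for i
    using f3 that pR3(1) unfolding bij_betw_def partition_on_def by auto
  have f1d: "f1 i \<inter> f1 j = {}" if "i < 4" "j < 4" "i \<noteq> j" for i j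
  proof -
    have "f1 i \<noteq> f1 j" using f1 that unfolding bij_betw_def inj_on_def by auto
    thus ?thesis using pR1(1) f1i that unfolding partition_on_def disjoint_def by blast
  qed
  have f2d: "f2 i \<inter> f2 j = {}" if "i < 4" "j < 4" "i \<noteq> j" for i j
  proof -
    have "f2 i \<noteq> f2 j" using f2 that unfolding bij_betw_def inj_on_def by auto
    thus ?thesis using pR2(1) f2i that unfolding partition_on_def disjoint_def by blast
  qed
  have f3d: "f3 i \<inter> f3 j = {}" if "i < 4" "j < 4" "i \<noteq> j" for i j
  proof -
    have "f3 i \<noteq> f3 j" using f3 that unfolding bij_betw_def inj_on_def by auto
    thus ?thesis using pR3(1) f3i that unfolding partition_on_def disjoint_def by blast
  qed
  define K where "K i = f1 i \<union> f2 i \<union> f3 i" for i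
  define T where "T s = {{x, y, L x y} | x y. x \<in> G1 \<and> y \<in> G2 \<and> M x y = s}" for s
  have G1ne: "G1 \<noteq> {}" using c by auto
  have TD: "T s \<subseteq> D" for s using LD unfolding T_def by blast
  have Tne: "T s \<noteq> {}" if sG: "s \<in> G3" for s
  proof -
    obtain x where x: "x \<in> G1" using G1ne by blast
    obtain y where "y \<in> G2" "M x y = s" using Mrow[OF x] sG unfolding bij_betw_def by blast
    thus ?thesis using x unfolding T_def by blast
  qed
  have Tdet: "s = s'" if tt: "t \<in> T s" "t \<in> T s'" for t s s'
  proof -
    obtain x y where xy: "x \<in> G1" "y \<in> G2" "M x y = s" "t = {x, y, L x y}"
      using tt(1) unfolding T_def by blast
    obtain x' y' where xy': "x' \<in> G1" "y' \<in> G2" "M x' y' = s'" "t = {x', y', L x' y'}"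
      using tt(2) unfolding T_def by blast
    have "x = x' \<and> y = y'" using blkeq[OF d xy(1) xy'(1) xy(2) xy'(2), of "L x y" "L x' y'"]
      LD xy xy' by simp
    thus ?thesis using xy xy' by simp
  qed
  have KB: "K i \<subseteq> B1 \<union> B2 \<union> B3" if "i < 4" for i using f1i f2i f3i that unfolding K_def by blast
  have parK: "partition_on P (K i)" if "i < 4" for i
  proof -
    have "partition_on G1 (f1 i)" "partition_on G2 (f2 i)" "partition_on G3 (f3 i)"
      using pR1(2) pR2(2) pR3(2) f1i f2i f3i that by auto
    hence "partition_on ((G1 \<union> G2) \<union> G3) ((f1 i \<union> f2 i) \<union> f3 i)"
      using partition_on_Un d by (metis Int_Un_distrib2 sup_bot.right_neutral)
    thus ?thesis unfolding K_def P .
  qed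
  have parT: "partition_on P (T s)" if s: "s \<in> G3" for s
  proof (rule partition_onI)
    show "\<Union>(T s) = P"
    proof
      show "\<Union>(T s) \<subseteq> P" unfolding T_def P using LD by blast
      show "P \<subseteq> \<Union>(T s)"
      proof
        fix p assume "p \<in> P"
        hence "p \<in> G1 \<or> p \<in> G2 \<or> p \<in> G3" unfolding P by blast
        moreover have "p \<in> \<Union>(T s)" if p: "p \<in> G1"
        proof -
          obtain y where y: "y \<in> G2" "M p y = s" using Mrow[OF p] s unfolding bij_betw_def by blast
          have "{p, y, L p y} \<in> T s" unfolding T_def using p y by blast
          thus ?thesis by blast
        qed
        moreover have "p \<in> \<Union>(T s)" if p: "p \<in> G2"
        proof -
          obtain x where x: "x \<in> G1" "M x p = s" using Mcol[OF p] s unfolding bij_betw_def by blast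
          have "{x, p, L x p} \<in> T s" unfolding T_def using p x by blast
          thus ?thesis by blast
        qed
        moreover have "p \<in> \<Union>(T s)" if p: "p \<in> G3"
        proof -
          have "(p, s) \<in> (\<lambda>(x, y). (L x y, M x y)) ` (G1 \<times> G2)" using Ob p s unfolding bij_betw_def by blast
          then obtain x y where xy: "x \<in> G1" "y \<in> G2" "L x y = p" "M x y = s" by auto
          have "{x, y, L x y} \<in> T s" unfolding T_def using xy by blast
          thus ?thesis using xy by blast
        qed
        ultimately show "p \<in> \<Union>(T s)" by blast
      qed
    qed
    show "{} \<notin> T s" unfolding T_def by blast
    fix t1 t2 assume t: "t1 \<in> T s" "t2 \<in> T s" "t1 \<noteq> t2"
    obtain x1 y1 where 1: "x1 \<in> G1" "y1 \<in> G2" "M x1 y1 = s" "t1 = {x1, y1, L x1 y1}"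
      using t(1) unfolding T_def by blast
    obtain x2 y2 where 2: "x2 \<in> G1" "y2 \<in> G2" "M x2 y2 = s" "t2 = {x2, y2, L x2 y2}"
      using t(2) unfolding T_def by blast
    have L1: "L x1 y1 \<in> G3" and L2: "L x2 y2 \<in> G3" using LD 1 2 by auto
    show "disjnt t1 t2"
    proof (rule ccontr)
      assume "\<not> disjnt t1 t2"
      then obtain q where q: "q \<in> t1" "q \<in> t2" unfolding disjnt_def by blast
      have "x1 = x2 \<or> y1 = y2 \<or> L x1 y1 = L x2 y2" using q 1 2 L1 L2 d by blast
      moreover have False if "x1 = x2"
      proof -
        have "y1 = y2" using Mrow[OF 1(1)] 1 2 that unfolding bij_betw_def inj_on_def by metis
        thus False using t 1 2 that by simp
      qed
      moreover have False if "y1 = y2"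
      proof -
        have "x1 = x2" using Mcol[OF 1(2)] 1 2 that unfolding bij_betw_def inj_on_def by metis
        thus False using t 1 2 that by simp
      qed
      moreover have False if "L x1 y1 = L x2 y2"
      proof -
        have "inj_on (\<lambda>(x, y). (L x y, M x y)) (G1 \<times> G2)" using Ob unfolding bij_betw_def by blast
        hence "(x1, y1) = (x2, y2)" using 1 2 that unfolding inj_on_def by fastforce
        thus False using t 1 2 by simp
      qed
      ultimately show False by blast
    qed
  qed
  define R where "R = K ` {0..<4} \<union> T ` G3"
  have pK: "partition_on (B1 \<union> B2 \<union> B3) (K ` {0..<4})"
  proof (rule partition_onI)
    have "\<Union>(K ` {0..<4}) = \<Union>(f1 ` {0..<4}) \<union> \<Union>(f2 ` {0..<4}) \<union> \<Union>(f3 ` {0..<4})"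
      unfolding K_def by blast
    also have "\<dots> = \<Union>R1 \<union> \<Union>R2 \<union> \<Union>R3" using f1 f2 f3 unfolding bij_betw_def by simp
    also have "\<dots> = B1 \<union> B2 \<union> B3" using pR1 pR2 pR3 unfolding partition_on_def by simp
    finally show "\<Union>(K ` {0..<4}) = B1 \<union> B2 \<union> B3" .
    show "{} \<notin> K ` {0..<4}" using f1i unfolding K_def by fastforce
    fix p q assume pq: "p \<in> K ` {0..<4}" "q \<in> K ` {0..<4}" "p \<noteq> q"
    obtain i where i: "i < 4" "p = K i" using pq(1) by auto
    obtain j where j: "j < 4" "q = K j" using pq(2) by auto
    have ij: "i < 4" "j < 4" "p = K i" "q = K j" using i j by auto
    hence "i \<noteq> j" using pq by auto
    hence "f1 i \<inter> f1 j = {}" "f2 i \<inter> f2 j = {}" "f3 i \<inter> f3 j = {}"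
      using f1d f2d f3d ij by auto
    moreover have "f1 i \<subseteq> B1" "f2 i \<subseteq> B2" "f3 i \<subseteq> B3" "f1 j \<subseteq> B1" "f2 j \<subseteq> B2" "f3 j \<subseteq> B3"
      using f1i f2i f3i ij by auto
    ultimately show "disjnt p q" unfolding ij K_def disjnt_def using B12 B13 B23 by blast
  qed
  have pT: "partition_on D (T ` G3)"
  proof (rule partition_onI)
    show "\<Union>(T ` G3) = D"
    proof
      show "\<Union>(T ` G3) \<subseteq> D" using TD by blast
      show "D \<subseteq> \<Union>(T ` G3)"
      proof
        fix t assume t: "t \<in> D"
        then obtain x y where xy: "x \<in> G1" "y \<in> G2" "t = {x, y, L x y}" using Dform by blast
        have "M x y \<in> G3" using Mrow[OF xy(1)] xy(2) unfolding bij_betw_def by blast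
        moreover have "t \<in> T (M x y)" using xy unfolding T_def by blast
        ultimately show "t \<in> \<Union>(T ` G3)" by blast
      qed
    qed
    show "{} \<notin> T ` G3" using Tne by auto
    fix p q assume "p \<in> T ` G3" "q \<in> T ` G3" "p \<noteq> q"
    thus "disjnt p q" using Tdet unfolding disjnt_def by blast
  qed
  have pR: "partition_on B R"
    unfolding R_def Bdef by (rule partition_on_Un[OF pK pT BD])
  have res: "resolution P B R"
    unfolding resolution_def parallel_class_def using pR parK parT unfolding R_def by auto
  have injK: "inj_on K {0..<4}"
  proof (rule inj_onI)
    fix i j assume ij: "i \<in> {0..<4}" "j \<in> {0..<4}" "K i = K j"
    have ii: "i < 4" "j < 4" using ij by auto
    have "K i \<inter> B1 = f1 i" using f1i[OF ii(1)] f2i[OF ii(1)] f3i[OF ii(1)] B12 B13 unfolding K_def by blast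
    moreover have "K j \<inter> B1 = f1 j" using f1i[OF ii(2)] f2i[OF ii(2)] f3i[OF ii(2)] B12 B13 unfolding K_def by blast
    ultimately have "f1 i = f1 j" using ij by simp
    thus "i = j" using f1 ij unfolding bij_betw_def inj_on_def by blast
  qed
  have injT: "inj_on T G3"
  proof (rule inj_onI)
    fix s s' assume "s \<in> G3" "s' \<in> G3" "T s = T s'"
    thus "s = s'" using Tne Tdet by blast
  qed
  have cK: "card (K ` {0..<4}) = 4" using card_image[OF injK] by simp
  have cT: "card (T ` G3) = 9" using card_image[OF injT] c by simp
  have dKT: "K ` {0..<4} \<inter> T ` G3 = {}"
  proof -
    have "K i \<noteq> T s" if "i < 4" "s \<in> G3" for i s
      using KB[OF that(1)] TD[of s] Tne[OF that(2)] BD by blast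
    thus ?thesis by auto
  qed
  have fG3: "finite G3" using c(3) card_gt_0_iff[of G3] by simp
  have fT: "finite (T ` G3)" using fG3 by simp
  have "card R = 13" unfolding R_def using card_Un_disjoint[OF _ fT dKT] cK cT by simp
  thus ?thesis using res by blast
qed

theorem proposition3p6:
  shows "(\<forall>(P :: 'a set) B. sts P B \<and> card P = 9 \<and> rank3 P B \<le> 8 \<longrightarrow> resolvable P B)
    \<and> (\<forall>(P :: 'a set) B G1 G2 G3 B1 B2 B3 D.
         sts P B \<and> card P = 27 \<and> rank3 P B \<le> 25 \<and>
         P = G1 \<union> G2 \<union> G3 \<and> G1 \<inter> G2 = {} \<and> G1 \<inter> G3 = {} \<and> G2 \<inter> G3 = {} \<and>
         card G1 = 9 \<and> card G2 = 9 \<and> card G3 = 9 \<and>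
         sts G1 B1 \<and> sts G2 B2 \<and> sts G3 B3 \<and> transversal_design G1 G2 G3 D \<and>
         B = B1 \<union> B2 \<union> B3 \<union> D \<and>
         has_orthogonal_mate G1 G2 G3 (td_square G3 D)
       \<longrightarrow> resolvable P B \<and> (\<exists>R. resolution P B R \<and> card R = 13))"
  proof (intro conjI allI impI)
  fix P :: "'a set" and B
  assume "sts P B \<and> card P = 9 \<and> rank3 P B \<le> 8"
  thus "resolvable P B" unfolding resolvable_def using sts9_resolution by blast
next
  fix P :: "'a set" and B G1 G2 G3 B1 B2 B3 D
  assume h: "sts P B \<and> card P = 27 \<and> rank3 P B \<le> 25 \<and>
         P = G1 \<union> G2 \<union> G3 \<and> G1 \<inter> G2 = {} \<and> G1 \<inter> G3 = {} \<and> G2 \<inter> G3 = {} \<and>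
         card G1 = 9 \<and> card G2 = 9 \<and> card G3 = 9 \<and>
         sts G1 B1 \<and> sts G2 B2 \<and> sts G3 B3 \<and> transversal_design G1 G2 G3 D \<and>
         B = B1 \<union> B2 \<union> B3 \<union> D \<and>
         has_orthogonal_mate G1 G2 G3 (td_square G3 D)"
  have "\<exists>R. resolution P B R \<and> card R = 13"
    using partb[of P G1 G2 G3 B1 B2 B3 D B] h by blast
  thus "resolvable P B" unfolding resolvable_def by blast
  show "\<exists>R. resolution P B R \<and> card R = 13" by fact
qed

end
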